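(* Let $z\in I^+$, $X\subseteq N$, and suppose $\varphi(\overline z^X)=(B,Y,M,A,X)$ (in particular $\varphi(\overline z^X)\ne\mathbf 0$). Then for all $C\in X$ and $D\in Y$ the following are equivalent: (i) $C\,\mathcal R_X\,A$ and $B\,\mathcal R_Y\,D$; (ii) there exist sentential forms $u,v$ of $\overline{\mathcal G}$ such that $(C,X)\Rightarrow^*_{\overline{\mathcal G}}u\,(D,Y)[\overline z^X]\,v$.
   Context: Let $\mathcal{G}=(N,T,I,P,S)$ be an indexed grammar: $N$ (non-terminals), $T$ (terminals), $I$ (stack symbols) finite pairwise disjoint alphabets, $S\in N$, and productions of the forms $A\to w$ ($w\in T^*$), $A\to BC$, $A\to Bf$, $Af\to B$ ($A,B,C\in N$, $f\in I$). Terms $A[z]$ ($A\in N$, $z\in I^*$ the stack, top on the left; $A$ means $A[\varepsilon]$); sentential forms are words over terms and terminals; derivation: $uA[z]v\Rightarrow uB[z]C[z]v$ if $A\to BC\in P$; $uA[z]v\Rightarrow uB[fz]v$ if $A\to Bf\in P$; $uA[fz]v\Rightarrow uB[z]v$ if $Af\to B\in P$; $uA[z]v\Rightarrow uwv$ if $A\to w\in P$, $w\in T^*$; $\Rightarrow^*$ is the reflexive transitive closure. For $X\subseteq N$, $z\in I^*$: $z\cdot X=\{A\in N:\exists u\in(X\cup T)^*, A[z]\Rightarrow^*u\}$ (non-terminals in $u$ with empty stack); $\mathrm{Useful}=\{A:\exists w\in T^*, A\Rightarrow^*w\}$; assume $S\in\mathrm{Useful}$. The annotated version $\overline{\mathcal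 G}$ has non-terminals $\overline N=\{(A,X)\in N\times2^N:A\in X\}$, stack symbols $\overline I=I\times 2^N$, start $(S,\mathrm{Useful})$, and productions: $(A,X)\to w$ for $A\to w\in P$, $A\in X$; $(A,X)\to(B,X)(C,X)$ for $A\to BC\in P$, $A,B,C\in X$; $(A,X)\to(B,Y)(f,X)$ for $A\to Bf\in P$ with $Y=f\cdot X$, $A\in X$, $B\in Y$; $(A,Y)(f,X)\to(B,X)$ for $Af\to B\in P$ with $Y=f\cdot X$, $A\in Y$, $B\in X$. For $z=f_n\cdots f_1\in I^*$, $\overline z^X=(f_n,X_n)\cdots(f_1,X_1)$ with $X_1=X$, $X_{i+1}=f_i\cdot X_i$. Assume every $f\in I$ occurs in some production $A\to Bf$ and there are functions $\alpha,\beta:I\to N$ such that every production $A\to Bf$ in $P$ satisfies $A=\alpha(f)$, $B=\beta(f)$. For $X\subseteq N$, $A\,\mathcal R_X\,B$ holds iff $A,B\in X$ and $(A,X)\Rightarrow^*_{\overline{\mathcal G}}u\,(B,X)\,v$ for some sentential forms $u,v$ of $\overline{\mathcal G}$ (with $(B,X)$ having empty stack). The stack monoid $\mathbb M$ has elements: all tuples $(B,Y,M,A,X)$ with $A,B\in N$, $X,Y\subseteq N$, $M\in\mathbb B^{N\times N}$ (Boolean matrices, product over $(\vee,\wedge)$), plus a neutral element $\mathbf 1$ and an absorbing element $\mathbf 0$; product $(B_2,Y_2,M_2,A_2,X_2)\cdot(B_1,Y_1,M_1,A_1,X_1)=(B_2,Y_2,M_1M_2,A_1,X_1)$ if $X_2=Y_1$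 and $B_1\,\mathcal R_{X_2}\,A_2$, and $\mathbf 0$ otherwise. $\varphi:\overline I^*\to\mathbb M$ is the monoid morphism with $\varphi(f,X)=(\beta(f),f\cdot X,M_{f,X},\alpha(f),X)$, where $M_{f,X}(A,B)=\top$ iff $A[f]\Rightarrow^*_{\mathcal G}uBv$ for some $u,v\in(X\cup T)^*$. *)

theory Defs
  imports Main
begin

text \<open>Indexed grammars. Non-terminals, terminals and stack symbols are the (finite,
pairwise disjoint) types 'n, 't, 'i; the sets N, T, I are their universes.\<close>

datatype ('n, 't, 'i) prod =
    TermP 'n "'t list"
  | BranchP 'n 'n 'n
  | PushP 'n 'n 'i
  | PopP 'n 'i 'n

text \<open>Symbols of sentential forms: terminals or terms A[z] (stack z, top at the head).\<close>
datatype ('n, 't, 'i) sym = Tm 't | Nt 'n "'i list"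

inductive step :: "('n,'t,'i) prod set \<Rightarrow> ('n,'t,'i) sym list \<Rightarrow> ('n,'t,'i) sym list \<Rightarrow> bool"
  for P where
  branch: "BranchP A B C \<in> P \<Longrightarrow> step P (l @ [Nt A z] @ r) (l @ [Nt B z, Nt C z] @ r)"
| push: "PushP A B f \<in> P \<Longrightarrow> step P (l @ [Nt A z] @ r) (l @ [Nt B (f # z)] @ r)"
| pop: "PopP A f B \<in> P \<Longrightarrow> step P (l @ [Nt A (f # z)] @ r) (l @ [Nt B z] @ r)"
| termin: "TermP A w \<in> P \<Longrightarrow> step P (l @ [Nt A z] @ r) (l @ map Tm w @ r)"

definition derives :: "('n,'t,'i) prod set \<Rightarrow> ('n,'t,'i) sym list \<Rightarrow> ('n,'t,'i) sym list \<Rightarrow> bool" where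
  "derives P = (step P)\<^sup>*\<^sup>*"

definition over :: "'n set \<Rightarrow> ('n,'t,'i) sym list \<Rightarrow> bool" where
  "over X u \<longleftrightarrow> (\<forall>s\<in>set u. (\<exists>a. s = Tm a) \<or> (\<exists>B\<in>X. s = Nt B []))"

definition dot :: "('n,'t,'i) prod set \<Rightarrow> 'i list \<Rightarrow> 'n set \<Rightarrow> 'n set" where
  "dot P z X = {A. \<exists>u. over X u \<and> derives P [Nt A z] u}"

definition Useful :: "('n,'t,'i) prod set \<Rightarrow> 'n set" where
  "Useful P = {A. \<exists>w. derives P [Nt A []] (map Tm w)}"

definition ann :: "('n,'t,'i) prod set \<Rightarrow> ('n \<times> 'n set, 't, 'i \<times> 'n set) prod set" where
  "ann P =
     {TermP (A, X) w | A X w. TermP A w \<in> P \<and> A \<in> X}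
   \<union> {BranchP (A, X) (B, X) (C, X) | A B C X. BranchP A B C \<in> P \<and> A \<in> X \<and> B \<in> X \<and> C \<in> X}
   \<union> {PushP (A, X) (B, dot P [f] X) (f, X) | A B f X.
        PushP A B f \<in> P \<and> A \<in> X \<and> B \<in> dot P [f] X}
   \<union> {PopP (A, dot P [f] X) (f, X) (B, X) | A B f X.
        PopP A f B \<in> P \<and> A \<in> dot P [f] X \<and> B \<in> X}"

text \<open>Annotated stack: for z = f_n ... f_1, overline z^X = (f_n,X_n)...(f_1,X_1), with
  X_1 = X, X_{i+1} = f_i \<cdot> X_i.\<close>
fun ann_rev :: "('n,'t,'i) prod set \<Rightarrow> 'i list \<Rightarrow> 'n set \<Rightarrow> ('i \<times> 'n set) list" where
  "ann_rev P [] X = []"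
| "ann_rev P (f # fs) X = (f, X) # ann_rev P fs (dot P [f] X)"

definition ann_stack :: "('n,'t,'i) prod set \<Rightarrow> 'i list \<Rightarrow> 'n set \<Rightarrow> ('i \<times> 'n set) list" where
  "ann_stack P z X = rev (ann_rev P (rev z) X)"

definition RX :: "('n,'t,'i) prod set \<Rightarrow> 'n set \<Rightarrow> 'n \<Rightarrow> 'n \<Rightarrow> bool" where
  "RX P X A B \<longleftrightarrow> A \<in> X \<and> B \<in> X \<and>
     (\<exists>u v. derives (ann P) [Nt (A, X) []] (u @ [Nt (B, X) []] @ v))"

datatype 'n mon = One | Zero | Elem 'n "'n set" "'n \<Rightarrow> 'n \<Rightarrow> bool" 'n "'n set"

definition bmult :: "('n \<Rightarrow> 'n \<Rightarrow> bool) \<Rightarrow> ('n \<Rightarrow> 'n \<Rightarrow> bool) \<Rightarrow> ('n \<Rightarrow> 'n \<Rightarrow> bool)" where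
  "bmult M1 M2 = (\<lambda>A C. \<exists>B. M1 A B \<and> M2 B C)"

fun mmult :: "('n,'t,'i) prod set \<Rightarrow> 'n mon \<Rightarrow> 'n mon \<Rightarrow> 'n mon" where
  "mmult P One e = e"
| "mmult P e One = e"
| "mmult P Zero e = Zero"
| "mmult P e Zero = Zero"
| "mmult P (Elem B2 Y2 M2 A2 X2) (Elem B1 Y1 M1 A1 X1) =
     (if X2 = Y1 \<and> RX P X2 B1 A2 then Elem B2 Y2 (bmult M1 M2) A1 X1 else Zero)"

definition Mfx :: "('n,'t,'i) prod set \<Rightarrow> 'i \<Rightarrow> 'n set \<Rightarrow> 'n \<Rightarrow> 'n \<Rightarrow> bool" where
  "Mfx P f X A B \<longleftrightarrow> (\<exists>u v. over X u \<and> over X v \<and> derives P [Nt A [f]] (u @ [Nt B []] @ v))"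

definition phi_letter :: "('n,'t,'i) prod set \<Rightarrow> ('i \<Rightarrow> 'n) \<Rightarrow> ('i \<Rightarrow> 'n) \<Rightarrow> 'i \<times> 'n set \<Rightarrow> 'n mon" where
  "phi_letter P \<alpha> \<beta> fX = (case fX of (f, X) \<Rightarrow> Elem (\<beta> f) (dot P [f] X) (Mfx P f X) (\<alpha> f) X)"

definition phi :: "('n,'t,'i) prod set \<Rightarrow> ('i \<Rightarrow> 'n) \<Rightarrow> ('i \<Rightarrow> 'n) \<Rightarrow> ('i \<times> 'n set) list \<Rightarrow> 'n mon" where
  "phi P \<alpha> \<beta> w = foldr (\<lambda>a e. mmult P (phi_letter P \<alpha> \<beta> a) e) w One"

end

theory Submission
  imports Defs
begin


fun Xtop :: "('n,'t,'i) prod set \<Rightarrow> 'i list \<Rightarrow> 'n set \<Rightarrow> 'n set" where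
  "Xtop P [] X = X"
| "Xtop P (f # z) X = dot P [f] (Xtop P z X)"

lemma ann_rev_snoc:
  "ann_rev P (ys @ [f]) X = ann_rev P ys X @ [(f, foldl (\<lambda>X g. dot P [g] X) X ys)]"
  by (induction ys arbitrary: X) auto

lemma Xtop_foldl: "Xtop P z X = foldl (\<lambda>X g. dot P [g] X) X (rev z)"
  by (induction z) auto

lemma ann_stack_Cons: "ann_stack P (f # z) X = (f, Xtop P z X) # ann_stack P z X"
  by (simp add: ann_stack_def ann_rev_snoc Xtop_foldl)

lemma ann_stack_Nil: "ann_stack P [] X = []"
  by (simp add: ann_stack_def)

lemma ann_stack_last: "z \<noteq> [] \<Longrightarrow> ann_stack P z X \<noteq> [] \<and> last (ann_stack P z X) = (last z, X)"
proof (induction z)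
  case Nil then show ?case by simp
next
  case (Cons f z)
  then show ?case by (cases z) (auto simp: ann_stack_Cons ann_stack_Nil)
qed

lemma phi_Cons: "phi P \<alpha> \<beta> (a # xs) = mmult P (phi_letter P \<alpha> \<beta> a) (phi P \<alpha> \<beta> xs)"
  by (simp add: phi_def)

lemma phi_Nil: "phi P \<alpha> \<beta> [] = One"
  by (simp add: phi_def)

lemma phi_not_One: "phi P \<alpha> \<beta> (a # xs) \<noteq> One"
  unfolding phi_Cons phi_letter_def
  by (cases a; cases "phi P \<alpha> \<beta> xs") auto

lemma step_ctx: "step Q x y \<Longrightarrow> step Q (la @ x @ ra) (la @ y @ ra)"
proof (induction rule: step.induct)
  case (branch A B C l z r)
  then show ?case using step.branch[of A B C Q "la@l" z "r@ra"] by simp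
next
  case (push A B f l z r)
  then show ?case using step.push[of A B f Q "la@l" z "r@ra"] by simp
next
  case (pop A f B l z r)
  then show ?case using step.pop[of A f B Q "la@l" z "r@ra"] by simp
next
  case (termin A w l z r)
  then show ?case using step.termin[of A w Q "la@l" z "r@ra"] by simp
qed

lemma derives_ctx: "derives Q x y \<Longrightarrow> derives Q (la @ x @ ra) (la @ y @ ra)"
  unfolding derives_def
proof (induction rule: rtranclp_induct)
  case base then show ?case by simp
next
  case (step y z) then show ?case
    by (meson rtranclp.rtrancl_into_rtrancl step_ctx)
qed

fun addst :: "'i list \<Rightarrow> ('n,'t,'i) sym \<Rightarrow> ('n,'t,'i) sym" where
  "addst s (Tm a) = Tm a"
| "addst s (Nt A z) = Nt A (z @ s)"

lemma step_lift: "step Q x y \<Longrightarrow> step Q (map (addst s) x) (map (addst s) y)"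
proof (induction rule: step.induct)
  case (branch A B C l z r)
  then show ?case using step.branch[of A B C Q "map (addst s) l" "z@s" "map (addst s) r"] by simp
next
  case (push A B f l z r)
  then show ?case using step.push[of A B f Q "map (addst s) l" "z@s" "map (addst s) r"] by simp
next
  case (pop A f B l z r)
  then show ?case using step.pop[of A f B Q "map (addst s) l" "z@s" "map (addst s) r"] by simp
next
  case (termin A w l z r)
  then show ?case using step.termin[of A w Q "map (addst s) l" "z@s" "map (addst s) r"]
    by (simp add: comp_def)
qed

lemma derives_lift: "derives Q x y \<Longrightarrow> derives Q (map (addst s) x) (map (addst s) y)"
  unfolding derives_def
proof (induction rule: rtranclp_induct)
  case base then show ?case by simp
next
  case (step y z) then show ?case
    by (meson rtranclp.rtrancl_into_rtrancl step_lift)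
qed

lemma RX_lift: "RX P X A B \<Longrightarrow> \<exists>u v. derives (ann P) [Nt (A,X) s] (u @ [Nt (B,X) s] @ v)"
proof -
  assume "RX P X A B"
  then obtain u v where "derives (ann P) [Nt (A, X) []] (u @ [Nt (B, X) []] @ v)"
    unfolding RX_def by blast
  from derives_lift[OF this, of s] show ?thesis by auto
qed

lemma ann_push: "PushP a b f \<in> P \<Longrightarrow> a \<in> Z \<Longrightarrow> b \<in> dot P [f] Z \<Longrightarrow>
   PushP (a,Z) (b, dot P [f] Z) (f,Z) \<in> ann P"
  unfolding ann_def by blast

lemma ann_push_inv: "PushP x y g \<in> ann P \<Longrightarrow> \<exists>a b f Z. x = (a,Z) \<and> y = (b, dot P [f] Z) \<and> g = (f,Z)
   \<and> PushP a b f \<in> P \<and> a \<in> Z \<and> b \<in> dot P [f] Z"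
  unfolding ann_def by blast



lemma fwd:
  assumes pe: "\<forall>f. \<exists>A' B'. PushP A' B' f \<in> P"
    and ab: "\<forall>A' B' f. PushP A' B' f \<in> P \<longrightarrow> A' = \<alpha> f \<and> B' = \<beta> f"
  shows "z \<noteq> [] \<Longrightarrow> phi P \<alpha> \<beta> (ann_stack P z X) = Elem B Y M A X' \<Longrightarrow>
     X' = X \<and> Y = Xtop P z X \<and> B = \<beta> (hd z) \<and> A = \<alpha> (last z) \<and>
     (\<forall>C D. RX P X C A \<longrightarrow> RX P Y B D \<longrightarrow>
        (\<exists>u v. derives (ann P) [Nt (C,X) []] (u @ [Nt (D,Y) (ann_stack P z X)] @ v)))"
proof (induction z arbitrary: B Y M A X')
  case Nil then show ?case by simp
next
  case (Cons f z)
  have pf: "PushP (\<alpha> f) (\<beta> f) f \<in> P" using pe ab by metis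
  show ?case
  proof (cases "z = []")
    case True
    with Cons.prems have eq: "B = \<beta> f" "Y = dot P [f] X" "A = \<alpha> f" "X' = X"
      by (auto simp: ann_stack_Cons ann_stack_Nil phi_Cons phi_Nil phi_letter_def)
    have "\<exists>u v. derives (ann P) [Nt (C,X) []] (u @ [Nt (D,Y) (ann_stack P (f#z) X)] @ v)"
      if r1: "RX P X C A" and r2: "RX P Y B D" for C D
    proof -
      from r1 obtain u v where d1: "derives (ann P) [Nt (C, X) []] (u @ [Nt (\<alpha> f, X) []] @ v)"
        unfolding RX_def eq by blast
      have m: "PushP (\<alpha> f, X) (\<beta> f, dot P [f] X) (f, X) \<in> ann P"
        using r1 r2 unfolding RX_def eq by (intro ann_push[OF pf]) auto
      have s2: "step (ann P) (u @ [Nt (\<alpha> f, X) []] @ v) (u @ [Nt (\<beta> f, Y) [(f,X)]] @ v)"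
        using step.push[OF m, of u "[]" v] eq by simp
      from RX_lift[OF r2, of "[(f,X)]"] obtain u' v' where
        d3: "derives (ann P) [Nt (B, Y) [(f,X)]] (u' @ [Nt (D, Y) [(f,X)]] @ v')" by blast
      have "derives (ann P) [Nt (C, X) []] (u @ (u' @ [Nt (D, Y) [(f,X)]] @ v') @ v)"
        using d1 s2 derives_ctx[OF d3, of u v] eq unfolding derives_def
        by (meson rtranclp.rtrancl_into_rtrancl rtranclp_trans)
      then show ?thesis using True
        by (intro exI[of _ "u@u'"] exI[of _ "v'@v"]) (simp add: ann_stack_Cons ann_stack_Nil)
    qed
    then show ?thesis using eq True by simp
  next
    case False
    define Xt where "Xt = Xtop P z X"
    obtain a zs where az: "ann_stack P z X = a # zs"
      using False ann_stack_last by (metis list.exhaust)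
    have "phi P \<alpha> \<beta> (ann_stack P z X) \<noteq> One" using az phi_not_One by simp
    moreover have "phi P \<alpha> \<beta> (ann_stack P z X) \<noteq> Zero"
      using Cons.prems by (auto simp: ann_stack_Cons phi_Cons phi_letter_def)
    ultimately obtain B1 Y1 M1 A1 X1 where e1: "phi P \<alpha> \<beta> (ann_stack P z X) = Elem B1 Y1 M1 A1 X1"
      by (cases "phi P \<alpha> \<beta> (ann_stack P z X)") auto
    from Cons.IH[OF False e1] have ih: "X1 = X" "Y1 = Xt" "B1 = \<beta> (hd z)" "A1 = \<alpha> (last z)"
      and ihd: "\<forall>C D. RX P X C A1 \<longrightarrow> RX P Y1 B1 D \<longrightarrow>
        (\<exists>u v. derives (ann P) [Nt (C,X) []] (u @ [Nt (D,Y1) (ann_stack P z X)] @ v))"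
      by (auto simp: Xt_def)
    from Cons.prems e1 ih have eq: "B = \<beta> f" "Y = dot P [f] Xt" "A = A1" "X' = X"
      and rr: "RX P Xt B1 (\<alpha> f)"
      by (auto simp: ann_stack_Cons phi_Cons phi_letter_def Xt_def split: if_splits)
    have "\<exists>u v. derives (ann P) [Nt (C,X) []] (u @ [Nt (D,Y) (ann_stack P (f#z) X)] @ v)"
      if r1: "RX P X C A" and r2: "RX P Y B D" for C D
    proof -
      have "RX P X C A1" "RX P Y1 B1 (\<alpha> f)" using r1 rr eq ih by auto
      with ihd obtain u v where
        d1: "derives (ann P) [Nt (C, X) []] (u @ [Nt (\<alpha> f, Xt) (ann_stack P z X)] @ v)"
        using ih by blast
      have m: "PushP (\<alpha> f, Xt) (\<beta> f, dot P [f] Xt) (f, Xt) \<in> ann P"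
        using rr r2 unfolding RX_def eq by (intro ann_push[OF pf]) auto
      have s2: "step (ann P) (u @ [Nt (\<alpha> f, Xt) (ann_stack P z X)] @ v)
           (u @ [Nt (\<beta> f, Y) (ann_stack P (f#z) X)] @ v)"
        using step.push[OF m, of u "ann_stack P z X" v] eq by (simp add: ann_stack_Cons Xt_def)
      from RX_lift[OF r2, of "ann_stack P (f#z) X"] obtain u' v' where
        d3: "derives (ann P) [Nt (B, Y) (ann_stack P (f#z) X)] (u' @ [Nt (D, Y) (ann_stack P (f#z) X)] @ v')"
        by blast
      have "derives (ann P) [Nt (C, X) []] (u @ (u' @ [Nt (D, Y) (ann_stack P (f#z) X)] @ v') @ v)"
        using d1 s2 derives_ctx[OF d3, of u v] eq unfolding derives_def
        by (meson rtranclp.rtrancl_into_rtrancl rtranclp_trans)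
      then show ?thesis by (intro exI[of _ "u@u'"] exI[of _ "v'@v"]) simp
    qed
    then show ?thesis using eq ih False by (simp add: Xt_def)
  qed
qed



inductive desc1 :: "('n,'t,'i) prod set \<Rightarrow> 'n \<times> 'i list \<Rightarrow> 'n \<times> 'i list \<Rightarrow> bool" for Q where
  bl: "BranchP A B C \<in> Q \<Longrightarrow> desc1 Q (A,z) (B,z)"
| br: "BranchP A B C \<in> Q \<Longrightarrow> desc1 Q (A,z) (C,z)"
| pu: "PushP A B f \<in> Q \<Longrightarrow> desc1 Q (A,z) (B,f#z)"
| po: "PopP A f B \<in> Q \<Longrightarrow> desc1 Q (A,f#z) (B,z)"

lemma derives_desc: "derives Q x y \<Longrightarrow> Nt D s \<in> set y \<Longrightarrow>
   \<exists>A z. Nt A z \<in> set x \<and> (desc1 Q)\<^sup>*\<^sup>* (A,z) (D,s)"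
  unfolding derives_def
proof (induction arbitrary: D s rule: rtranclp_induct)
  case base then show ?case by blast
next
  case (step y y')
  have lr: "Nt D s \<in> set y" if "y = l @ [Nt A z] @ r" "Nt D s \<in> set l \<or> Nt D s \<in> set r" for l A z r
    using that by auto
  from step.hyps(2) show ?case
  proof (cases rule: step.cases)
    case (branch A B C l z r)
    have "Nt A z \<in> set y" using branch by simp
    then obtain A' z' where h: "Nt A' z' \<in> set x" "(desc1 Q)\<^sup>*\<^sup>* (A',z') (A,z)" using step.IH by blast
    have "Nt D s \<in> set l \<or> Nt D s \<in> set r \<or> (D = B \<and> s = z) \<or> (D = C \<and> s = z)" using step.prems branch by auto
    then show ?thesis
    proof (elim disjE)
      assume "D = B \<and> s = z" then show ?thesis using h rtranclp.rtrancl_into_rtrancl[OF h(2) desc1.bl[OF branch(3)]] by blast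
    next
      assume "D = C \<and> s = z" then show ?thesis using h rtranclp.rtrancl_into_rtrancl[OF h(2) desc1.br[OF branch(3)]] by blast
    next
      assume "Nt D s \<in> set l" then show ?thesis using lr[OF branch(1)] step.IH by blast
    next
      assume "Nt D s \<in> set r" then show ?thesis using lr[OF branch(1)] step.IH by blast
    qed
  next
    case (push A B f l z r)
    have "Nt A z \<in> set y" using push by simp
    then obtain A' z' where h: "Nt A' z' \<in> set x" "(desc1 Q)\<^sup>*\<^sup>* (A',z') (A,z)" using step.IH by blast
    have "Nt D s \<in> set l \<or> Nt D s \<in> set r \<or> (D = B \<and> s = f#z)" using step.prems push by auto
    then show ?thesis
    proof (elim disjE)
      assume "D = B \<and> s = f#z" then show ?thesis using h rtranclp.rtrancl_into_rtrancl[OF h(2) desc1.pu[OF push(3)]] by blast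
    next
      assume "Nt D s \<in> set l" then show ?thesis using lr[OF push(1)] step.IH by blast
    next
      assume "Nt D s \<in> set r" then show ?thesis using lr[OF push(1)] step.IH by blast
    qed
  next
    case (pop A f B l z r)
    have "Nt A (f#z) \<in> set y" using pop by simp
    then obtain A' z' where h: "Nt A' z' \<in> set x" "(desc1 Q)\<^sup>*\<^sup>* (A',z') (A,f#z)" using step.IH by blast
    have "Nt D s \<in> set l \<or> Nt D s \<in> set r \<or> (D = B \<and> s = z)" using step.prems pop by auto
    then show ?thesis
    proof (elim disjE)
      assume "D = B \<and> s = z" then show ?thesis using h rtranclp.rtrancl_into_rtrancl[OF h(2) desc1.po[OF pop(3)]] by blast
    next
      assume "Nt D s \<in> set l" then show ?thesis using lr[OF pop(1)] step.IH by blast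
    next
      assume "Nt D s \<in> set r" then show ?thesis using lr[OF pop(1)] step.IH by blast
    qed
  next
    case (termin A w l z r)
    then have "Nt D s \<in> set l \<or> Nt D s \<in> set r" using step.prems by auto
    then show ?thesis using lr[OF termin(1)] step.IH by blast
  qed
qed

lemma desc1_derives: assumes "desc1 Q p q"
  shows "\<exists>u v. step Q [Nt (fst p) (snd p)] (u @ [Nt (fst q) (snd q)] @ v)"
  using assms
proof cases
  case (bl A B C z)
  then show ?thesis using step.branch[of A B C Q "[]" z "[]"] by (intro exI[of _ "[]"] exI[of _ "[Nt C z]"]) simp
next
  case (br A B C z)
  then show ?thesis using step.branch[of A B C Q "[]" z "[]"] by (intro exI[of _ "[Nt B z]"] exI[of _ "[]"]) simp
next
  case (pu A B f z)
  then show ?thesis using step.push[of A B f Q "[]" z "[]"] by (intro exI[of _ "[]"] exI[of _ "[]"]) simp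
next
  case (po A f B z)
  then show ?thesis using step.pop[of A f B Q "[]" z "[]"] by (intro exI[of _ "[]"] exI[of _ "[]"]) simp
qed

lemma descs_derives: "(desc1 Q)\<^sup>*\<^sup>* p q \<Longrightarrow>
   \<exists>u v. derives Q [Nt (fst p) (snd p)] (u @ [Nt (fst q) (snd q)] @ v)"
proof (induction rule: rtranclp_induct)
  case base then show ?case unfolding derives_def by (intro exI[of _ "[]"]) auto
next
  case (step q r)
  then obtain u v where d: "derives Q [Nt (fst p) (snd p)] (u @ [Nt (fst q) (snd q)] @ v)" by blast
  from desc1_derives[OF step.hyps(2)] obtain u' v' where
    "step Q [Nt (fst q) (snd q)] (u' @ [Nt (fst r) (snd r)] @ v')" by blast
  from step_ctx[OF this, of u v] d have
    "derives Q [Nt (fst p) (snd p)] (u @ (u' @ [Nt (fst r) (snd r)] @ v') @ v)"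
    unfolding derives_def by (meson rtranclp.rtrancl_into_rtrancl)
  then show ?case by (intro exI[of _ "u@u'"] exI[of _ "v'@v"]) simp
qed

lemma desc1_unlift: assumes "desc1 Q (A, z@s) (B, z'@s)" shows "desc1 Q (A,z) (B,z')"
  using assms
proof (cases rule: desc1.cases)
  case (bl C)
  then show ?thesis by (auto intro: desc1.intros)
next
  case (br C)
  then show ?thesis by (auto intro: desc1.intros)
next
  case (pu f)
  then have "z' = f # z" by (metis append_Cons append_same_eq)
  then show ?thesis using pu by (auto intro: desc1.intros)
next
  case (po f)
  show ?thesis
  proof (cases z)
    case Nil
    then have "length s = Suc (length (z'@s))" using po by (metis length_Cons self_append_conv2)
    then show ?thesis by simp
  next
    case (Cons g zz)
    then have "g = f" "zz = z'" using po by auto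
    then show ?thesis using po Cons by (auto intro: desc1.intros)
  qed
qed

definition descS :: "('n,'t,'i) prod set \<Rightarrow> 'i list \<Rightarrow> 'n \<times> 'i list \<Rightarrow> 'n \<times> 'i list \<Rightarrow> bool" where
  "descS Q s p q \<longleftrightarrow> desc1 Q (fst p, snd p @ s) (fst q, snd q @ s)"

lemma descS_unlift: "(descS Q s)\<^sup>*\<^sup>* p q \<Longrightarrow> (desc1 Q)\<^sup>*\<^sup>* p q"
proof (induction rule: rtranclp_induct)
  case base then show ?case by simp
next
  case (step q r)
  then have "desc1 Q (fst q, snd q) (fst r, snd r)"
    using desc1_unlift[of Q "fst q" "snd q" s "fst r" "snd r"] unfolding descS_def by blast
  then show ?case using step by (simp add: rtranclp.rtrancl_into_rtrancl)
qed


lemma desc1_inv: "desc1 Q (A,z) (B,z') \<Longrightarrow>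
   (\<exists>C. BranchP A B C \<in> Q \<and> z' = z) \<or> (\<exists>C. BranchP A C B \<in> Q \<and> z' = z) \<or>
   (\<exists>f. PushP A B f \<in> Q \<and> z' = f#z) \<or> (\<exists>f. PopP A f B \<in> Q \<and> z = f#z')"
  by (erule desc1.cases) auto

lemma push_inv: "(desc1 Q)\<^sup>*\<^sup>* (A0, []) q \<Longrightarrow> snd q = w @ g # zs' \<Longrightarrow>
   \<exists>A' B'. (desc1 Q)\<^sup>*\<^sup>* (A0,[]) (A', zs') \<and> PushP A' B' g \<in> Q \<and>
      (descS Q (g#zs'))\<^sup>*\<^sup>* (B', []) (fst q, w)"
proof (induction arbitrary: w g zs' rule: rtranclp_induct)
  case base then show ?case by simp
next
  case (step q r)
  obtain A z where q: "q = (A,z)" by fastforce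
  obtain B z' where r: "r = (B,z')" by fastforce
  have z': "z' = w @ g # zs'" using step.prems r by simp
  from desc1_inv[of Q A z B z'] step.hyps(2) q r
  consider (b) "z' = z" "desc1 Q (A,z) (B,z)" | (pu) f where "PushP A B f \<in> Q" "z' = f#z"
    | (po) f where "PopP A f B \<in> Q" "z = f#z'"
    by auto
  then show ?case
  proof cases
    case b
    then obtain A' B' where "(desc1 Q)\<^sup>*\<^sup>* (A0,[]) (A', zs')" "PushP A' B' g \<in> Q"
      "(descS Q (g#zs'))\<^sup>*\<^sup>* (B', []) (A, w)" using step.IH[of w g zs'] q z' by auto
    moreover have "descS Q (g#zs') (A, w) (B, w)" using b z' by (simp add: descS_def)
    ultimately show ?thesis using r by (auto intro: rtranclp.rtrancl_into_rtrancl)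
  next
    case pu
    show ?thesis
    proof (cases w)
      case Nil
      then have "f = g" "z = zs'" using pu z' by auto
      then show ?thesis using pu step.hyps(1) Nil q r by auto
    next
      case (Cons f' w')
      then have "f' = f" "z = w' @ g # zs'" using pu z' by auto
      then obtain A' B' where "(desc1 Q)\<^sup>*\<^sup>* (A0,[]) (A', zs')" "PushP A' B' g \<in> Q"
        "(descS Q (g#zs'))\<^sup>*\<^sup>* (B', []) (A, w')" using step.IH[of w' g zs'] q by auto
      moreover have "descS Q (g#zs') (A, w') (B, w)" using pu Cons \<open>f' = f\<close> \<open>z = w' @ g # zs'\<close>
        by (auto simp: descS_def intro: desc1.intros)
      ultimately show ?thesis using r by (auto intro: rtranclp.rtrancl_into_rtrancl)
    qed
  next
    case po
    then have "snd q = (f # w) @ g # zs'" using z' q by auto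
    then obtain A' B' where "(desc1 Q)\<^sup>*\<^sup>* (A0,[]) (A', zs')" "PushP A' B' g \<in> Q"
      "(descS Q (g#zs'))\<^sup>*\<^sup>* (B', []) (A, f # w)" using step.IH[of "f#w" g zs'] q by auto
    moreover have "descS Q (g#zs') (A, f # w) (B, w)" using po z'
      by (auto simp: descS_def intro: desc1.intros)
    ultimately show ?thesis using r by (auto intro: rtranclp.rtrancl_into_rtrancl)
  qed
qed



theorem lemma5p2:
  fixes P :: "('n::finite, 't::finite, 'i::finite) prod set"
    and S :: 'n and \<alpha> \<beta> :: "'i \<Rightarrow> 'n"
    and z :: "'i list" and X Y :: "'n set" and A B :: 'n and M :: "'n \<Rightarrow> 'n \<Rightarrow> bool"
  assumes "finite P"
    and "S \<in> Useful P"
    and "\<forall>f. \<exists>A' B'. PushP A' B' f \<in> P"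
    and "\<forall>A' B' f. PushP A' B' f \<in> P \<longrightarrow> A' = \<alpha> f \<and> B' = \<beta> f"
    and "z \<noteq> []"
    and "phi P \<alpha> \<beta> (ann_stack P z X) = Elem B Y M A X"
  shows "\<forall>C\<in>X. \<forall>D\<in>Y. (RX P X C A \<and> RX P Y B D) \<longleftrightarrow>
           (\<exists>u v. derives (ann P) [Nt (C, X) []] (u @ [Nt (D, Y) (ann_stack P z X)] @ v))"
proof (intro ballI iffI)
  note F = fwd[OF assms(3,4) assms(5,6)]
  have Yeq: "Y = Xtop P z X" and Beq: "B = \<beta> (hd z)" and Aeq: "A = \<alpha> (last z)" using F by auto
  fix C D assume C: "C \<in> X" and D: "D \<in> Y"
  {
    assume "RX P X C A \<and> RX P Y B D"
    then show "\<exists>u v. derives (ann P) [Nt (C, X) []] (u @ [Nt (D, Y) (ann_stack P z X)] @ v)"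
      using F by blast
  }
  assume "\<exists>u v. derives (ann P) [Nt (C, X) []] (u @ [Nt (D, Y) (ann_stack P z X)] @ v)"
  then obtain u v where d: "derives (ann P) [Nt (C, X) []] (u @ [Nt (D, Y) (ann_stack P z X)] @ v)"
    by blast
  from derives_desc[OF d, of "(D,Y)" "ann_stack P z X"]
  have ds: "(desc1 (ann P))\<^sup>*\<^sup>* ((C,X),[]) ((D,Y), ann_stack P z X)" by auto
  obtain f z' where fz: "z = f # z'" using assms(5) by (cases z) auto
  define Xt where "Xt = Xtop P z' X"
  have zb: "ann_stack P z X = [] @ (f, Xt) # ann_stack P z' X"
    using fz by (simp add: ann_stack_Cons Xt_def)
  from push_inv[OF ds, of "[]" "(f,Xt)" "ann_stack P z' X"] zb obtain A' B' where
    pB: "PushP A' B' (f, Xt) \<in> ann P" and dB: "(descS (ann P) (ann_stack P z X))\<^sup>*\<^sup>* (B', []) ((D,Y), [])"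
    by auto
  from ann_push_inv[OF pB] obtain a b where ab: "B' = (b, dot P [f] Xt)" "PushP a b f \<in> P"
    "b \<in> dot P [f] Xt" by auto
  have "b = \<beta> f" using ab assms(4) by blast
  hence B': "B' = (B, Y)" "B \<in> Y" using ab Yeq Beq fz by (auto simp: Xt_def)
  from descs_derives[OF descS_unlift[OF dB]] B' have r2: "RX P Y B D"
    unfolding RX_def using D by auto
  have lz: "ann_stack P z X \<noteq> []" "last (ann_stack P z X) = (last z, X)"
    using ann_stack_last[OF assms(5)] by auto
  hence zb2: "ann_stack P z X = butlast (ann_stack P z X) @ [(last z, X)] @ []" by (metis append_butlast_last_id append_Nil2)
  from push_inv[OF ds, of "butlast (ann_stack P z X)" "(last z, X)" "[]"] zb2 obtain A'' B'' where
    dA: "(desc1 (ann P))\<^sup>*\<^sup>* ((C,X),[]) (A'', [])" and pA: "PushP A'' B'' (last z, X) \<in> ann P"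
    by (metis append_Cons append_Nil snd_conv)
  from ann_push_inv[OF pA] obtain a b where ab2: "A'' = (a, X)" "PushP a b (last z) \<in> P" "a \<in> X"
    by auto
  have "a = A" using ab2 assms(4) Aeq by blast
  with descs_derives[OF dA] ab2 C have r1: "RX P X C A" unfolding RX_def by auto
  show "RX P X C A \<and> RX P Y B D" using r1 r2 by blast
qed

end
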